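(* Let $A$ be a synaptic algebra, $p,q\in P$, $r:=(p\vee q)\wedge(p\vee q^{\perp})\wedge(p^{\perp}\vee q)\wedge(p^{\perp}\vee q^{\perp})$, and let $c:=(pqp+p^{\perp}q^{\perp}p^{\perp})^{1/2}$ and $s:=(pq^{\perp}p+p^{\perp}qp^{\perp})^{1/2}$. Then: (i) $c^2=pqp+p^{\perp}q^{\perp}p^{\perp}=1-(p-q)^2=(p-q^{\perp})^2=(p+q-1)^2$; (ii) $s^2=pq^{\perp}p+p^{\perp}qp^{\perp}=(p-q)^2$; (iii) $pc^2=pqp=c^2p$, $qc^2=qpq=c^2q$, $ps^2=pq^{\perp}p=s^2p$, $qs^2=qp^{\perp}q=s^2q$, and $s^2p^{\perp}=p^{\perp}qp^{\perp}=p^{\perp}s^2$; (iv) $c=|p-q^{\perp}|$ and $s=|p-q|$; (v) $c^2+s^2=1$; (vi) $0\le c^2,s^2,c,s\le1$, $c^2\le c$ and $s^2\le s$; (vii) $C(c)=C(c^2)=C(s^2)=C(s)$; (viii) $cCp$, $cCq$, $cCr$, $sCp$, $sCq$, $sCr$ and $cCs$; (ix) $C(p)\cap C(q)\subseteq C(c)=C(s)$.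
   Context: Synaptic algebra (Foulis): $R$ is a real linear associative algebra with unit $1$, and $A\subseteq R$ is a real linear subspace with $1\in A$. For $a,b\in A$ write $aCb$ iff $ab=ba$; $C(a):=\{b\in A: aCb\}$; $CC(a):=\{b\in A: bCd \text{ for all } d\in C(a)\}$. $A$ is a synaptic algebra with enveloping algebra $R$ iff: (SA1) $A$ is a partially ordered archimedean real linear space with positive cone $A^+$, $1$ is an order unit, $\|\cdot\|$ the order-unit norm; (SA2) $a\in A\Rightarrow a^2\in A^+$; (SA3) $a,b\in A^+\Rightarrow aba\in A^+$; (SA4) if $a\in A$, $b\in A^+$, $aba=0$ then $ab=ba=0$; (SA5) if $a\in A^+$ there is $b\in A^+\cap CC(a)$ with $b^2=a$; (SA6) for $a\in A$ there is $p=p^2\in A$ with $ab=0\Leftrightarrow pb=0$ for all $b\in A$; (SA7) if $1\le a$ there is $b\in A$ with $ab=ba=1$; (SA8) if $a,b\in A$, $a_1\le a_2\le\cdots$ are pairwise commuting elements of $C(b)$ with $\|a-a_n\|\to0$, then $a\in C(b)$. $A$ is nondegenerate. $P:=\{p\in A:p=p^2\}$ with the inherited order is an orthomodular lattice with $p^{\perp}:=1-p$, meet $\wedge$, join $\vee$. For $0\le a$, $a^{1/2}$ is the unique positive square root of $a$ in $A$; $|a|:=(a^2)^{1/2}$. ($c$ and $s$ are called the cosine and sine effects of $q$ with respect to $p$.) *)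

theory Defs
  imports Main "HOL.Real_Vector_Spaces"
begin

text \<open>Synaptic algebra A with enveloping algebra R (a real associative unital algebra,
  modelled by the type class real_algebra_1). A is a subset of R, Ap is its positive cone.\<close>

definition sa_le :: "'r::real_algebra_1 set \<Rightarrow> 'r \<Rightarrow> 'r \<Rightarrow> bool" where
  "sa_le Ap a b \<longleftrightarrow> b - a \<in> Ap"

definition comm :: "'r::real_algebra_1 \<Rightarrow> 'r \<Rightarrow> bool" where
  "comm a b \<longleftrightarrow> a * b = b * a"

definition Cm :: "'r::real_algebra_1 set \<Rightarrow> 'r \<Rightarrow> 'r set" where
  "Cm A a = {b \<in> A. comm a b}"

definition CCm :: "'r::real_algebra_1 set \<Rightarrow> 'r \<Rightarrow> 'r set" where
  "CCm A a = {b \<in> A. \<forall>d \<in> Cm A a. comm b d}"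

definition ou_norm :: "'r::real_algebra_1 set \<Rightarrow> 'r \<Rightarrow> real" where
  "ou_norm Ap a = Inf {l::real. 0 < l \<and> sa_le Ap (- (l *\<^sub>R 1)) a \<and> sa_le Ap a (l *\<^sub>R 1)}"

definition synaptic_algebra :: "'r::real_algebra_1 set \<Rightarrow> 'r set \<Rightarrow> bool" where
  "synaptic_algebra A Ap \<longleftrightarrow>
    \<comment> \<open>A is a real linear subspace of R containing 1\<close>
    0 \<in> A \<and> 1 \<in> A \<and> (\<forall>a\<in>A. \<forall>b\<in>A. a + b \<in> A) \<and> (\<forall>a\<in>A. \<forall>t::real. t *\<^sub>R a \<in> A) \<and>
    \<comment> \<open>(SA1) partially ordered by the cone Ap, archimedean, 1 an order unit\<close>
    Ap \<subseteq> A \<and> 0 \<in> Ap \<and> (\<forall>a\<in>Ap. \<forall>b\<in>Ap. a + b \<in> Ap) \<and>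
    (\<forall>a\<in>Ap. \<forall>t::real. 0 \<le> t \<longrightarrow> t *\<^sub>R a \<in> Ap) \<and>
    (\<forall>a\<in>Ap. - a \<in> Ap \<longrightarrow> a = 0) \<and>
    (\<forall>a\<in>A. \<forall>b\<in>A. (\<forall>n::nat. sa_le Ap (real n *\<^sub>R a) b) \<longrightarrow> sa_le Ap a 0) \<and>
    (\<forall>a\<in>A. \<exists>n::nat. sa_le Ap a (real n *\<^sub>R 1)) \<and>
    \<comment> \<open>(SA2)\<close>
    (\<forall>a\<in>A. a * a \<in> Ap) \<and>
    \<comment> \<open>(SA3)\<close>
    (\<forall>a\<in>Ap. \<forall>b\<in>Ap. a * b * a \<in> Ap) \<and>
    \<comment> \<open>(SA4)\<close>
    (\<forall>a\<in>A. \<forall>b\<in>Ap. a * b * a = 0 \<longrightarrow> a * b = 0 \<and> b * a = 0) \<and>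
    \<comment> \<open>(SA5)\<close>
    (\<forall>a\<in>Ap. \<exists>b\<in>Ap \<inter> CCm A a. b * b = a) \<and>
    \<comment> \<open>(SA6)\<close>
    (\<forall>a\<in>A. \<exists>p\<in>A. p * p = p \<and> (\<forall>b\<in>A. a * b = 0 \<longleftrightarrow> p * b = 0)) \<and>
    \<comment> \<open>(SA7)\<close>
    (\<forall>a\<in>A. sa_le Ap 1 a \<longrightarrow> (\<exists>b\<in>A. a * b = 1 \<and> b * a = 1)) \<and>
    \<comment> \<open>(SA8)\<close>
    (\<forall>a\<in>A. \<forall>b\<in>A. \<forall>x::nat \<Rightarrow> 'r.
        (\<forall>n. x n \<in> Cm A b) \<and> (\<forall>n. sa_le Ap (x n) (x (Suc n))) \<and>
        (\<forall>m n. comm (x m) (x n)) \<and> (\<lambda>n. ou_norm Ap (a - x n)) \<longlonglongrightarrow> 0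
        \<longrightarrow> a \<in> Cm A b) \<and>
    \<comment> \<open>nondegenerate\<close>
    (0::'r) \<noteq> 1"

definition projs :: "'r::real_algebra_1 set \<Rightarrow> 'r set" where
  "projs A = {p \<in> A. p * p = p}"

definition pmeet :: "'r::real_algebra_1 set \<Rightarrow> 'r set \<Rightarrow> 'r \<Rightarrow> 'r \<Rightarrow> 'r" where
  "pmeet A Ap p q = (THE r. r \<in> projs A \<and> sa_le Ap r p \<and> sa_le Ap r q \<and>
      (\<forall>t\<in>projs A. sa_le Ap t p \<and> sa_le Ap t q \<longrightarrow> sa_le Ap t r))"

definition pjoin :: "'r::real_algebra_1 set \<Rightarrow> 'r set \<Rightarrow> 'r \<Rightarrow> 'r \<Rightarrow> 'r" where
  "pjoin A Ap p q = (THE r. r \<in> projs A \<and> sa_le Ap p r \<and> sa_le Ap q r \<and>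
      (\<forall>t\<in>projs A. sa_le Ap p t \<and> sa_le Ap q t \<longrightarrow> sa_le Ap r t))"

definition sa_sqrt :: "'r::real_algebra_1 set \<Rightarrow> 'r \<Rightarrow> 'r" where
  "sa_sqrt Ap a = (THE b. b \<in> Ap \<and> b * b = a)"

definition sa_abs :: "'r::real_algebra_1 set \<Rightarrow> 'r \<Rightarrow> 'r" where
  "sa_abs Ap a = sa_sqrt Ap (a * a)"

end

theory Submission
  imports Defs
begin

locale sa =
  fixes A Ap :: "'r::real_algebra_1 set"
  assumes SA: "synaptic_algebra A Ap"
begin

lemma A0: "0 \<in> A" using SA unfolding synaptic_algebra_def by (elim conjE) assumption
lemma A1: "1 \<in> A" using SA unfolding synaptic_algebra_def by (elim conjE) assumption
lemma Aadd_all: "\<forall>a\<in>A. \<forall>b\<in>A. a + b \<in> A" using SA unfolding synaptic_algebra_def by (elim conjE) assumption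
lemma Aadd: "a\<in>A \<Longrightarrow> b\<in>A \<Longrightarrow> a+b\<in>A" using Aadd_all by blast
lemma Ascale_all: "\<forall>a\<in>A. \<forall>t::real. t *\<^sub>R a \<in> A" using SA unfolding synaptic_algebra_def by (elim conjE) assumption
lemma Ascale: "a\<in>A \<Longrightarrow> t *\<^sub>R a \<in> A" using Ascale_all by blast
lemma ApA: "Ap \<subseteq> A" using SA unfolding synaptic_algebra_def by (elim conjE) assumption
lemma Apadd_all: "\<forall>a\<in>Ap. \<forall>b\<in>Ap. a + b \<in> Ap" using SA unfolding synaptic_algebra_def by (elim conjE) assumption
lemma Apadd: "a\<in>Ap \<Longrightarrow> b\<in>Ap \<Longrightarrow> a+b\<in>Ap" using Apadd_all by blast
lemma Apanti_all: "\<forall>a\<in>Ap. - a \<in> Ap \<longrightarrow> a = 0" using SA unfolding synaptic_algebra_def by (elim conjE) assumption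
lemma Apanti: "a \<in> Ap \<Longrightarrow> -a \<in> Ap \<Longrightarrow> a = 0" using Apanti_all by blast
lemma sq_all: "\<forall>a\<in>A. a * a \<in> Ap" using SA unfolding synaptic_algebra_def by (elim conjE) assumption
lemma sq: "a\<in>A \<Longrightarrow> a*a \<in> Ap" using sq_all by blast
lemma SA3_all: "\<forall>a\<in>Ap. \<forall>b\<in>Ap. a * b * a \<in> Ap" using SA unfolding synaptic_algebra_def by (elim conjE) assumption
lemma SA3: "a\<in>Ap \<Longrightarrow> b\<in>Ap \<Longrightarrow> a*b*a \<in> Ap" using SA3_all by blast
lemma SA4_all: "\<forall>a\<in>A. \<forall>b\<in>Ap. a * b * a = 0 \<longrightarrow> a * b = 0 \<and> b * a = 0" using SA unfolding synaptic_algebra_def by (elim conjE) assumption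
lemma SA4: "a\<in>A \<Longrightarrow> b\<in>Ap \<Longrightarrow> a*b*a=0 \<Longrightarrow> a*b=0 \<and> b*a=0" using SA4_all by blast
lemma SA5_all: "\<forall>a\<in>Ap. \<exists>b\<in>Ap \<inter> CCm A a. b * b = a" using SA unfolding synaptic_algebra_def by (elim conjE) assumption
lemma SA5: "a\<in>Ap \<Longrightarrow> \<exists>b\<in>Ap \<inter> CCm A a. b*b=a" using SA5_all by blast
lemma SA6_all: "\<forall>a\<in>A. \<exists>p\<in>A. p * p = p \<and> (\<forall>b\<in>A. a * b = 0 \<longleftrightarrow> p * b = 0)" using SA unfolding synaptic_algebra_def by (elim conjE) assumption
lemma SA6: "a\<in>A \<Longrightarrow> \<exists>p\<in>A. p*p=p \<and> (\<forall>b\<in>A. a*b=0 \<longleftrightarrow> p*b=0)" using SA6_all by blast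
lemma SA7_all: "\<forall>a\<in>A. sa_le Ap 1 a \<longrightarrow> (\<exists>b\<in>A. a * b = 1 \<and> b * a = 1)" using SA unfolding synaptic_algebra_def by (elim conjE) assumption
lemma SA7: "a\<in>A \<Longrightarrow> sa_le Ap 1 a \<Longrightarrow> \<exists>b\<in>A. a*b=1 \<and> b*a=1" using SA7_all by blast

lemma ApA': "a \<in> Ap \<Longrightarrow> a \<in> A" using ApA by blast

lemma Aneg: "a\<in>A \<Longrightarrow> -a\<in>A" using Ascale[of a "-1"] by simp
lemma Adiff: "a\<in>A \<Longrightarrow> b\<in>A \<Longrightarrow> a-b\<in>A"
  by (metis Aadd Aneg diff_conv_add_uminus)
lemma one_Ap: "1\<in>Ap" using sq[OF A1] by simp

lemma jordan: "a\<in>A \<Longrightarrow> b\<in>A \<Longrightarrow> a*b+b*a\<in>A"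
proof -
  assume a: "a\<in>A" and b: "b\<in>A"
  have "(a+b)*(a+b) - a*a - b*b = a*b+b*a" by (simp add: algebra_simps)
  moreover have "(a+b)*(a+b) - a*a - b*b \<in> A"
    using Adiff[OF Adiff[OF ApA'[OF sq[OF Aadd[OF a b]]] ApA'[OF sq[OF a]]] ApA'[OF sq[OF b]]] .
  ultimately show ?thesis by simp
qed

lemma half: "x+x\<in>A \<Longrightarrow> x\<in>A"
proof -
  assume "x+x\<in>A"
  hence "(1/2::real) *\<^sub>R (x+x) \<in> A" by (rule Ascale)
  moreover have "(1/2::real) *\<^sub>R (x+x) = x"
    by (simp only: scaleR_2[symmetric] scaleR_scaleR) simp
  ultimately show ?thesis by simp
qed

lemma comm_prod: "a\<in>A \<Longrightarrow> b\<in>A \<Longrightarrow> a*b = b*a \<Longrightarrow> a*b\<in>A"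
  using jordan[of a b] half[of "a*b"] by simp

lemma triple: "x\<in>A \<Longrightarrow> y\<in>A \<Longrightarrow> z\<in>A \<Longrightarrow> x*y*z+z*y*x \<in> A"
proof -
  assume x: "x\<in>A" and y: "y\<in>A" and z: "z\<in>A"
  have e: "(x*y*z+z*y*x) + (x*y*z+z*y*x) = ((x*y+y*x)*z + z*(x*y+y*x)) + ((y*z+z*y)*x + x*(y*z+z*y)) - ((x*z+z*x)*y + y*(x*z+z*x))"
    by (simp add: algebra_simps)
  have "((x*y+y*x)*z + z*(x*y+y*x)) + ((y*z+z*y)*x + x*(y*z+z*y)) - ((x*z+z*x)*y + y*(x*z+z*x)) \<in> A"
    using Adiff[OF Aadd[OF jordan[OF jordan[OF x y] z] jordan[OF jordan[OF y z] x]] jordan[OF jordan[OF x z] y]] .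
  with e show ?thesis by (metis half)
qed

lemma sq_zero: "y\<in>A \<Longrightarrow> y*y=0 \<Longrightarrow> y=0" using SA4[OF _ one_Ap, of y] by simp

lemma Ap_sum_zero: "u\<in>Ap \<Longrightarrow> v\<in>Ap \<Longrightarrow> u+v=0 \<Longrightarrow> u=0"
proof -
  assume u: "u\<in>Ap" and v: "v\<in>Ap" and s: "u+v=0"
  hence "-u = v" by (simp add: add_eq_0_iff)
  with u v show ?thesis using Apanti by auto
qed

lemma L: "x\<in>A \<Longrightarrow> a\<in>Ap \<Longrightarrow> x*a=a*x \<Longrightarrow> x*a*x\<in>Ap"
proof -
  assume x: "x\<in>A" and a: "a\<in>Ap" and c: "x*a=a*x"
  obtain e where e: "e\<in>Ap" "e\<in>CCm A a" "e*e=a" using SA5[OF a] by blast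
  have "x\<in>Cm A a" using x c by (simp add: Cm_def comm_def)
  hence ex: "e*x = x*e" using e(2) by (simp add: CCm_def comm_def)
  have "x*a*x = (e*x)*(e*x)"
  proof -
    have "x*a*x = x*e*(e*x)" using e(3) by (metis mult.assoc)
    also have "\<dots> = e*x*(e*x)" using ex by simp
    finally show ?thesis .
  qed
  moreover have "e*x\<in>A" using comm_prod[OF ApA'[OF e(1)] x ex] .
  ultimately show ?thesis using sq by simp
qed

lemma P: "a\<in>Ap \<Longrightarrow> b\<in>Ap \<Longrightarrow> a*b=b*a \<Longrightarrow> a*b\<in>Ap"
proof -
  assume a: "a\<in>Ap" and b: "b\<in>Ap" and c: "a*b=b*a"
  obtain e where e: "e\<in>Ap" "e\<in>CCm A a" "e*e=a" using SA5[OF a] by blast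
  have "b\<in>Cm A a" using ApA'[OF b] c by (simp add: Cm_def comm_def)
  hence eb: "e*b = b*e" using e(2) by (simp add: CCm_def comm_def)
  have "e*b*e = a*b" using e(3) eb by (metis mult.assoc)
  thus ?thesis using SA3[OF e(1) b] by simp
qed

lemma sqrt_props: assumes a: "a\<in>Ap"
  shows "sa_sqrt Ap a \<in> Ap \<and> sa_sqrt Ap a \<in> CCm A a \<and> sa_sqrt Ap a * sa_sqrt Ap a = a"
proof -
  obtain b where b: "b\<in>Ap" "b\<in>CCm A a" "b*b=a" using SA5[OF a] by blast
  have uniq: "d=b" if d: "d\<in>Ap" "d*d=a" for d
  proof -
    have dA: "d\<in>A" using ApA' d(1) .
    have bA: "b\<in>A" using ApA' b(1) .
    have "a*d = d*a" using d(2) by (metis mult.assoc)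
    hence "d\<in>Cm A a" using dA by (simp add: Cm_def comm_def)
    hence bd: "b*d = d*b" using b(2) by (simp add: CCm_def comm_def)
    define x where "x = b-d"
    have xA: "x\<in>A" unfolding x_def using bA dA by (rule Adiff)
    have xb: "x*b=b*x" unfolding x_def using bd by (simp add: algebra_simps)
    have xd: "x*d=d*x" unfolding x_def using bd by (simp add: algebra_simps)
    have "x*(b+d) = 0" unfolding x_def using bd b(3) d(2) by (simp add: algebra_simps)
    hence sum: "x*b*x + x*d*x = 0" by (metis distrib_left distrib_right mult_zero_left)
    have 1: "x*b*x\<in>Ap" using L[OF xA b(1) xb] .
    have 2: "x*d*x\<in>Ap" using L[OF xA d(1) xd] .
    have z1: "x*b*x = 0" using Ap_sum_zero[OF 1 2 sum] .
    hence z2: "x*d*x = 0" using sum by simp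
    have "x*b = 0" using SA4[OF xA b(1) z1] by simp
    moreover have "x*d = 0" using SA4[OF xA d(1) z2] by simp
    ultimately have "x*x = 0" unfolding x_def by (simp add: algebra_simps)
    hence "x = 0" using sq_zero xA by simp
    thus ?thesis unfolding x_def by simp
  qed
  have "sa_sqrt Ap a = b" unfolding sa_sqrt_def
    proof (rule the_equality)
    show "b \<in> Ap \<and> b * b = a" using b by simp
  next
    fix d assume "d \<in> Ap \<and> d * d = a" thus "d = b" using uniq by blast
  qed
  thus ?thesis using b by simp
qed


lemma proj: "e\<in>projs A \<Longrightarrow> e\<in>A \<and> e*e=e" by (simp add: projs_def)
lemma proj_Ap: "e\<in>projs A \<Longrightarrow> e\<in>Ap" using proj[of e] sq[of e] by simp
lemma proj_compl: assumes e: "e\<in>projs A" shows "1-e\<in>projs A"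
proof -
  have "1-e\<in>A" using Adiff[OF A1] proj[OF e] by blast
  moreover have "(1-e)*(1-e) = 1-e" using proj[OF e] by (simp add: algebra_simps)
  ultimately show ?thesis by (simp add: projs_def)
qed

lemma le_imp: assumes e: "e\<in>projs A" and f: "f\<in>projs A" and le: "sa_le Ap e f"
  shows "e*f = e \<and> f*e = e"
proof -
  have eA: "e\<in>A" "e*e=e" using proj[OF e] by auto
  have fA: "f\<in>A" "f*f=f" using proj[OF f] by auto
  have f': "1-f\<in>Ap" using proj_Ap[OF proj_compl[OF f]] .
  have fe: "f-e\<in>Ap" using le by (simp add: sa_le_def)
  have 1: "(1-f)*(f-e)*(1-f)\<in>Ap" using SA3[OF f' fe] .
  have "(1-f)*(f-e)*(1-f) = -((1-f)*e*(1-f))" using fA(2) by (simp add: algebra_simps)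
  with 1 have 2: "-((1-f)*e*(1-f))\<in>Ap" by simp
  have 3: "(1-f)*e*(1-f)\<in>Ap" using SA3[OF f' proj_Ap[OF e]] .
  have "(1-f)*e*(1-f) = 0" using Apanti[OF 3 2] .
  hence "(1-f)*e = 0 \<and> e*(1-f) = 0" using SA4[OF ApA'[OF f'] proj_Ap[OF e]] by simp
  thus ?thesis by (simp add: algebra_simps)
qed

lemma le_of: assumes e: "e\<in>projs A" and f: "f\<in>projs A" and ef: "e*f = e"
  shows "sa_le Ap e f"
proof -
  have eA: "e\<in>A" "e*e=e" using proj[OF e] by auto
  have fA: "f\<in>A" "f*f=f" using proj[OF f] by auto
  have f': "1-f\<in>Ap" using proj_Ap[OF proj_compl[OF f]] .
  have "e*(1-f)*e = 0" using ef eA(2) by (simp add: algebra_simps)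
  hence "(1-f)*e = 0" using SA4[OF eA(1) f'] by simp
  hence fe: "f*e = e" by (simp add: algebra_simps)
  have "(f-e)*(f-e) = f-e" using fe ef eA(2) fA(2) by (simp add: algebra_simps)
  moreover have "(f-e)*(f-e)\<in>Ap" using sq Adiff fA(1) eA(1) by simp
  ultimately show ?thesis by (simp add: sa_le_def)
qed

lemma le_antisym: "sa_le Ap a b \<Longrightarrow> sa_le Ap b a \<Longrightarrow> a = b"
  using Apanti[of "b-a"] by (simp add: sa_le_def)

lemma carrier: assumes a: "a\<in>A"
  shows "\<exists>k\<in>A. k*k=k \<and> (\<forall>b\<in>A. a*b=0 \<longleftrightarrow> k*b=0) \<and> (\<forall>x\<in>A. a*x=x*a \<longrightarrow> k*x=x*k)"
proof -
  obtain k where k: "k\<in>A" "k*k=k" "\<forall>b\<in>A. a*b=0 \<longleftrightarrow> k*b=0" using SA6[OF a] by blast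
  have k1: "1-k\<in>A" using A1 k(1) Adiff by simp
  have "k*(1-k) = 0" using k(2) by (simp add: algebra_simps)
  hence ak: "a*(1-k) = 0" using k(3) k1 by blast
  have "k*x=x*k" if x: "x\<in>A" "a*x=x*a" for x
  proof -
    define w where "w = x*(1-k) + (1-k)*x"
    have wA: "w\<in>A" unfolding w_def using jordan[OF x(1) k1] .
    have "a*w = x*(a*(1-k)) + (a*(1-k))*x" unfolding w_def using x(2)
      by (simp add: algebra_simps) (metis mult.assoc)
    hence "a*w = 0" using ak by simp
    hence kw0: "k*w = 0" using k(3) wA by blast
    have kk2: "k*(k*z) = k*z" for z using k(2) by (metis mult.assoc)
    have "k*w = k*x - k*x*k" unfolding w_def by (simp add: algebra_simps kk2 k(2))
    hence kx: "k*x*k = k*x" using kw0 by simp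
    define y where "y = (1-k)*x*k + k*x*(1-k)"
    have yA: "y\<in>A" unfolding y_def using triple[OF k1 x(1) k(1)] .
    have y: "y = (1-k)*x*k" unfolding y_def using kx by (simp add: algebra_simps)
    have "y*y = 0" unfolding y using k(2)
    proof -
      have "(1-k)*x*k*((1-k)*x*k) = (1-k)*x*(k*(1-k))*x*k" by (simp add: mult.assoc)
      also have "k*(1-k) = 0" using k(2) by (simp add: algebra_simps)
      finally show "(1-k)*x*k*((1-k)*x*k) = 0" by simp
    qed
    hence "y = 0" using sq_zero yA by simp
    hence "x*k = k*x*k" using y by (simp add: algebra_simps)
    thus ?thesis using kx by simp
  qed
  thus ?thesis using k by blast
qed

lemma join_ex: assumes e: "e\<in>projs A" and f: "f\<in>projs A"
  shows "\<exists>j\<in>projs A. sa_le Ap e j \<and> sa_le Ap f j \<and> (\<forall>t\<in>projs A. sa_le Ap e t \<and> sa_le Ap f t \<longrightarrow> sa_le Ap j t)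
     \<and> (\<forall>x\<in>A. e*x=x*e \<longrightarrow> f*x=x*f \<longrightarrow> j*x=x*j)"
proof -
  have eA: "e\<in>A" "e*e=e" using proj[OF e] by auto
  have fA: "f\<in>A" "f*f=f" using proj[OF f] by auto
  obtain k where k: "k\<in>A" "k*k=k" "\<forall>b\<in>A. (e+f)*b=0 \<longleftrightarrow> k*b=0" "\<forall>x\<in>A. (e+f)*x=x*(e+f) \<longrightarrow> k*x=x*k"
    using carrier[OF Aadd[OF eA(1) fA(1)]] by blast
  have kp: "k\<in>projs A" using k by (simp add: projs_def)
  have k1: "1-k\<in>A" using A1 k(1) Adiff by simp
  have k1p: "1-k\<in>Ap" using proj_Ap[OF proj_compl[OF kp]] .
  have "k*(1-k) = 0" using k(2) by (simp add: algebra_simps)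
  hence ak: "(e+f)*(1-k) = 0" using k(3) k1 by blast
  have "(1-k)*e*(1-k) + (1-k)*f*(1-k) = (1-k)*((e+f)*(1-k))" by (simp add: algebra_simps)
  hence s: "(1-k)*e*(1-k) + (1-k)*f*(1-k) = 0" using ak by simp
  have 1: "(1-k)*e*(1-k)\<in>Ap" using SA3[OF k1p proj_Ap[OF e]] .
  have 2: "(1-k)*f*(1-k)\<in>Ap" using SA3[OF k1p proj_Ap[OF f]] .
  have z1: "(1-k)*e*(1-k) = 0" using Ap_sum_zero[OF 1 2 s] .
  hence z2: "(1-k)*f*(1-k) = 0" using s by simp
  have "e*(1-k) = 0" using SA4[OF k1 proj_Ap[OF e] z1] by simp
  hence "e*k = e" by (simp add: algebra_simps)
  hence le1: "sa_le Ap e k" using le_of[OF e kp] by simp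
  have "f*(1-k) = 0" using SA4[OF k1 proj_Ap[OF f] z2] by simp
  hence "f*k = f" by (simp add: algebra_simps)
  hence le2: "sa_le Ap f k" using le_of[OF f kp] by simp
  have least: "sa_le Ap k t" if t: "t\<in>projs A" "sa_le Ap e t" "sa_le Ap f t" for t
  proof -
    have "e*t = e" "f*t = f" using le_imp[OF e t(1) t(2)] le_imp[OF f t(1) t(3)] by auto
    hence "(e+f)*(1-t) = 0" by (simp add: algebra_simps)
    moreover have "1-t\<in>A" using proj_compl[OF t(1)] proj by blast
    ultimately have "k*(1-t) = 0" using k(3) by blast
    hence "k*t = k" by (simp add: algebra_simps)
    thus ?thesis using le_of[OF kp t(1)] by simp
  qed
  have cm: "k*x=x*k" if x: "x\<in>A" "e*x=x*e" "f*x=x*f" for x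
    using k(4) x by (simp add: algebra_simps)
  show ?thesis using kp le1 le2 least cm by blast
qed

lemma pjoin_props: assumes e: "e\<in>projs A" and f: "f\<in>projs A"
  shows "pjoin A Ap e f \<in> projs A \<and> sa_le Ap e (pjoin A Ap e f) \<and> sa_le Ap f (pjoin A Ap e f)
    \<and> (\<forall>t\<in>projs A. sa_le Ap e t \<and> sa_le Ap f t \<longrightarrow> sa_le Ap (pjoin A Ap e f) t)
    \<and> (\<forall>x\<in>A. e*x=x*e \<longrightarrow> f*x=x*f \<longrightarrow> pjoin A Ap e f*x=x*pjoin A Ap e f)"
proof -
  obtain j where j: "j\<in>projs A" "sa_le Ap e j" "sa_le Ap f j" "\<forall>t\<in>projs A. sa_le Ap e t \<and> sa_le Ap f t \<longrightarrow> sa_le Ap j t"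
     "\<forall>x\<in>A. e*x=x*e \<longrightarrow> f*x=x*f \<longrightarrow> j*x=x*j" using join_ex[OF e f] by blast
  have "pjoin A Ap e f = j" unfolding pjoin_def
  proof (rule the_equality)
    show "j \<in> projs A \<and> sa_le Ap e j \<and> sa_le Ap f j \<and> (\<forall>t\<in>projs A. sa_le Ap e t \<and> sa_le Ap f t \<longrightarrow> sa_le Ap j t)"
      using j by blast
  next
    fix r assume r: "r \<in> projs A \<and> sa_le Ap e r \<and> sa_le Ap f r \<and> (\<forall>t\<in>projs A. sa_le Ap e t \<and> sa_le Ap f t \<longrightarrow> sa_le Ap r t)"
    hence "sa_le Ap r j" "sa_le Ap j r" using j by blast+
    thus "r = j" using le_antisym by blast
  qed
  thus ?thesis using j by simp
qed

lemma compl_le: "sa_le Ap a b \<longleftrightarrow> sa_le Ap (1-b) (1-a)"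
  by (simp add: sa_le_def algebra_simps)

lemma pmeet_props: assumes e: "e\<in>projs A" and f: "f\<in>projs A"
  shows "pmeet A Ap e f \<in> projs A
    \<and> (\<forall>x\<in>A. e*x=x*e \<longrightarrow> f*x=x*f \<longrightarrow> pmeet A Ap e f*x=x*pmeet A Ap e f)"
proof -
  define j where "j = pjoin A Ap (1-e) (1-f)"
  have J: "j \<in> projs A" "sa_le Ap (1-e) j" "sa_le Ap (1-f) j"
    "\<forall>t\<in>projs A. sa_le Ap (1-e) t \<and> sa_le Ap (1-f) t \<longrightarrow> sa_le Ap j t"
    "\<forall>x\<in>A. (1-e)*x=x*(1-e) \<longrightarrow> (1-f)*x=x*(1-f) \<longrightarrow> j*x=x*j"
    using pjoin_props[OF proj_compl[OF e] proj_compl[OF f]] unfolding j_def by blast+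
  define m where "m = 1 - j"
  have mp: "m\<in>projs A" unfolding m_def using proj_compl[OF J(1)] .
  have m1: "sa_le Ap m e" using J(2) compl_le[of m e] unfolding m_def by simp
  have m2: "sa_le Ap m f" using J(3) compl_le[of m f] unfolding m_def by simp
  have m3: "sa_le Ap t m" if t: "t\<in>projs A" "sa_le Ap t e" "sa_le Ap t f" for t
  proof -
    have "sa_le Ap (1-e) (1-t)" "sa_le Ap (1-f) (1-t)" using t compl_le by blast+
    hence "sa_le Ap j (1-t)" using J(4) proj_compl[OF t(1)] by blast
    thus ?thesis using compl_le[of t m] unfolding m_def by simp
  qed
  have "pmeet A Ap e f = m" unfolding pmeet_def
  proof (rule the_equality)
    show "m \<in> projs A \<and> sa_le Ap m e \<and> sa_le Ap m f \<and> (\<forall>t\<in>projs A. sa_le Ap t e \<and> sa_le Ap t f \<longrightarrow> sa_le Ap t m)"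
      using mp m1 m2 m3 by blast
  next
    fix r assume r: "r \<in> projs A \<and> sa_le Ap r e \<and> sa_le Ap r f \<and> (\<forall>t\<in>projs A. sa_le Ap t e \<and> sa_le Ap t f \<longrightarrow> sa_le Ap t r)"
    hence "sa_le Ap r m" "sa_le Ap m r" using m3 mp m1 m2 by blast+
    thus "r = m" using le_antisym by blast
  qed
  moreover have "m*x=x*m" if x: "x\<in>A" "e*x=x*e" "f*x=x*f" for x
  proof -
    have "(1-e)*x=x*(1-e)" "(1-f)*x=x*(1-f)" using x by (simp_all add: algebra_simps)
    hence "j*x=x*j" using J(5) x(1) by blast
    thus ?thesis unfolding m_def by (simp add: algebra_simps)
  qed
  ultimately show ?thesis using mp by simp
qed

lemma le_one: assumes c: "c\<in>Ap" and c2: "1 - c*c\<in>Ap"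
  shows "1 - c\<in>Ap \<and> c - c*c\<in>Ap"
proof -
  have cA: "c\<in>A" using ApA' c .
  have "sa_le Ap 1 (1+c)" using c by (simp add: sa_le_def)
  then obtain b where b: "b\<in>A" "(1+c)*b=1" "b*(1+c)=1" using SA7[OF Aadd[OF A1 cA]] by blast
  have c1: "1+c\<in>Ap" using Apadd[OF one_Ap c] .
  have "b*(1+c)*b = b" using b(3) by simp
  moreover have "b*(1+c)*b\<in>Ap" using L[OF b(1) c1] b(2,3) by simp
  ultimately have bp: "b\<in>Ap" by simp
  have "b + b*c = b + c*b" using b(2,3) by (simp add: algebra_simps)
  hence bc: "b*c = c*b" by simp
  have "(1-c*c)*b = (1-c)*((1+c)*b)" by (simp add: algebra_simps)
  hence e: "(1-c*c)*b = 1-c" using b(2) by simp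
  have "(1-c*c)*b = b*(1-c*c)" using bc by (simp add: algebra_simps) (metis mult.assoc)
  hence "(1-c*c)*b\<in>Ap" using P[OF c2 bp] by simp
  hence 1: "1-c\<in>Ap" using e by simp
  have "c*(1-c)\<in>Ap" using P[OF c 1] by (simp add: algebra_simps)
  thus ?thesis using 1 by (simp add: algebra_simps)
qed

end

lemma comm_sym: "comm a b \<longleftrightarrow> comm b a" by (auto simp: comm_def)

theorem theorem4p3:
  fixes A Ap :: "'r::real_algebra_1 set" and p q r c s :: 'r
  assumes SA: "synaptic_algebra A Ap"
    and p: "p \<in> projs A" and q: "q \<in> projs A"
    and r_def: "r = pmeet A Ap (pmeet A Ap (pmeet A Ap (pjoin A Ap p q) (pjoin A Ap p (1 - q)))
                     (pjoin A Ap (1 - p) q)) (pjoin A Ap (1 - p) (1 - q))"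
    and c_def: "c = sa_sqrt Ap (p * q * p + (1 - p) * (1 - q) * (1 - p))"
    and s_def: "s = sa_sqrt Ap (p * (1 - q) * p + (1 - p) * q * (1 - p))"
  shows
        "(c * c = p * q * p + (1 - p) * (1 - q) * (1 - p) \<and>
     p * q * p + (1 - p) * (1 - q) * (1 - p) = 1 - (p - q) * (p - q) \<and>
     1 - (p - q) * (p - q) = (p - (1 - q)) * (p - (1 - q)) \<and>
     (p - (1 - q)) * (p - (1 - q)) = (p + q - 1) * (p + q - 1)) \<and>
    (s * s = p * (1 - q) * p + (1 - p) * q * (1 - p) \<and>
     p * (1 - q) * p + (1 - p) * q * (1 - p) = (p - q) * (p - q)) \<and>
    (p * (c * c) = p * q * p \<and> p * q * p = (c * c) * p \<and>
     q * (c * c) = q * p * q \<and> q * p * q = (c * c) * q \<and>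
     p * (s * s) = p * (1 - q) * p \<and> p * (1 - q) * p = (s * s) * p \<and>
     q * (s * s) = q * (1 - p) * q \<and> q * (1 - p) * q = (s * s) * q \<and>
     (s * s) * (1 - p) = (1 - p) * q * (1 - p) \<and> (1 - p) * q * (1 - p) = (1 - p) * (s * s)) \<and>
    (c = sa_abs Ap (p - (1 - q)) \<and> s = sa_abs Ap (p - q)) \<and>
    (c * c + s * s = 1) \<and>
    (sa_le Ap 0 (c * c) \<and> sa_le Ap (c * c) 1 \<and> sa_le Ap 0 (s * s) \<and> sa_le Ap (s * s) 1 \<and>
     sa_le Ap 0 c \<and> sa_le Ap c 1 \<and> sa_le Ap 0 s \<and> sa_le Ap s 1 \<and>
     sa_le Ap (c * c) c \<and> sa_le Ap (s * s) s) \<and>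
    (Cm A c = Cm A (c * c) \<and> Cm A (c * c) = Cm A (s * s) \<and> Cm A (s * s) = Cm A s) \<and>
    (comm c p \<and> comm c q \<and> comm c r \<and> comm s p \<and> comm s q \<and> comm s r \<and> comm c s) \<and>
    (Cm A p \<inter> Cm A q \<subseteq> Cm A c \<and> Cm A c = Cm A s)"
proof -
  interpret S: sa A Ap using SA by (simp add: sa_def)
  have pA: "p\<in>A" and pp: "p*p=p" using S.proj[OF p] by auto
  have qA: "q\<in>A" and qq: "q*q=q" using S.proj[OF q] by auto
  have pp2: "p*(p*z) = p*z" for z using pp by (metis mult.assoc)
  have qq2: "q*(q*z) = q*z" for z using qq by (metis mult.assoc)
  note R = pp qq pp2 qq2
  define X where "X = p * q * p + (1 - p) * (1 - q) * (1 - p)"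
  define Y where "Y = p * (1 - q) * p + (1 - p) * q * (1 - p)"
  have pAp: "p\<in>Ap" using S.proj_Ap[OF p] .
  have qAp: "q\<in>Ap" using S.proj_Ap[OF q] .
  have p'Ap: "1-p\<in>Ap" using S.proj_Ap[OF S.proj_compl[OF p]] .
  have q'Ap: "1-q\<in>Ap" using S.proj_Ap[OF S.proj_compl[OF q]] .
  have XAp: "X\<in>Ap" unfolding X_def using S.Apadd S.SA3 pAp qAp p'Ap q'Ap by blast
  have YAp: "Y\<in>Ap" unfolding Y_def using S.Apadd S.SA3 pAp qAp p'Ap q'Ap by blast
  have i1: "X = 1 - (p - q) * (p - q)" unfolding X_def by (simp add: algebra_simps R)
  have i2: "1 - (p - q) * (p - q) = (p - (1 - q)) * (p - (1 - q))" by (simp add: algebra_simps R)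
  have i3: "(p - (1 - q)) * (p - (1 - q)) = (p + q - 1) * (p + q - 1)" by (simp add: algebra_simps R)
  have i4: "Y = (p - q) * (p - q)" unfolding Y_def by (simp add: algebra_simps R)
  have XY: "X + Y = 1" using i1 i4 by simp
  have c: "c\<in>Ap" "c\<in>CCm A X" "c*c = X" using S.sqrt_props[OF XAp] unfolding c_def X_def by auto
  have s: "s\<in>Ap" "s\<in>CCm A Y" "s*s = Y" using S.sqrt_props[OF YAp] unfolding s_def Y_def by auto
  have cA: "c\<in>A" using S.ApA' c(1) .
  have sA: "s\<in>A" using S.ApA' s(1) .
  have iii: "p * X = p * q * p" "p * q * p = X * p"
     "q * X = q * p * q" "q * p * q = X * q"
     "p * Y = p * (1 - q) * p" "p * (1 - q) * p = Y * p"
     "q * Y = q * (1 - p) * q" "q * (1 - p) * q = Y * q"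
     "Y * (1 - p) = (1 - p) * q * (1 - p)" "(1 - p) * q * (1 - p) = (1 - p) * Y"
    unfolding X_def Y_def by (simp_all add: algebra_simps R)
  have cc: "comm c d" if "d\<in>A" "X*d = d*X" for d
    using c(2) that by (auto simp: CCm_def Cm_def comm_def)
  have sc: "comm s d" if "d\<in>A" "Y*d = d*Y" for d
    using s(2) that by (auto simp: CCm_def Cm_def comm_def)
  have pq_comm: "comm c d \<and> comm s d" if d: "d\<in>A" "p*d = d*p" "q*d = d*q" for d
  proof -
    have d1: "d*p = p*d" "d*q = q*d" using d by auto
    have d2: "d*(p*z) = p*(d*z)" "d*(q*z) = q*(d*z)" for z using d1 by (metis mult.assoc)+
    have "X*d = d*X" "Y*d = d*Y" unfolding X_def Y_def by (simp_all add: algebra_simps d1 d2)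
    thus ?thesis using cc sc d(1) by blast
  qed
  have ab: "c = sa_abs Ap (p - (1 - q))" "s = sa_abs Ap (p - q)"
    unfolding sa_abs_def c_def s_def using i1 i2 i4 unfolding X_def Y_def by simp_all
  have le1: "1 - c\<in>Ap \<and> c - c*c\<in>Ap" using S.le_one[OF c(1)] c(3) XY YAp
    by (metis add_diff_cancel_left')
  have le2: "1 - s\<in>Ap \<and> s - s*s\<in>Ap" using S.le_one[OF s(1)] s(3) XY XAp
    by (metis add_diff_cancel_right')
  have vi: "sa_le Ap 0 (c * c) \<and> sa_le Ap (c * c) 1 \<and> sa_le Ap 0 (s * s) \<and> sa_le Ap (s * s) 1 \<and>
     sa_le Ap 0 c \<and> sa_le Ap c 1 \<and> sa_le Ap 0 s \<and> sa_le Ap s 1 \<and>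
     sa_le Ap (c * c) c \<and> sa_le Ap (s * s) s"
  proof -
    have e1: "1 - c*c = s*s" using XY c(3) s(3) by (metis add_diff_cancel_left')
    have e2: "1 - s*s = c*c" using XY c(3) s(3) by (metis add_diff_cancel_right')
    show ?thesis unfolding sa_le_def using le1 le2 c(1,3) s(1,3) XAp YAp e1 e2 by simp
  qed
  have C1: "Cm A c = Cm A (c*c)"
  proof
    show "Cm A c \<subseteq> Cm A (c*c)" by (auto simp: Cm_def comm_def) (metis mult.assoc)
    show "Cm A (c*c) \<subseteq> Cm A c" using cc c(3) by (auto simp: Cm_def comm_def)
  qed
  have C3: "Cm A s = Cm A (s*s)"
  proof
    show "Cm A s \<subseteq> Cm A (s*s)" by (auto simp: Cm_def comm_def) (metis mult.assoc)
    show "Cm A (s*s) \<subseteq> Cm A s" using sc s(3) by (auto simp: Cm_def comm_def)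
  qed
  have ss: "s*s = 1 - c*c" using c(3) s(3) XY by (simp add: eq_diff_eq add.commute)
  have C2: "Cm A (c*c) = Cm A (s*s)" unfolding ss by (auto simp: Cm_def comm_def algebra_simps)
  have cp: "comm c p" using cc[OF pA] iii(1,2) c(3) by simp
  have cq: "comm c q" using cc[OF qA] iii(3,4) c(3) by simp
  have sp: "comm s p" using sc[OF pA] iii(5,6) by simp
  have sq': "comm s q" using sc[OF qA] iii(7,8) by simp
  have "s \<in> Cm A (s*s)" using sA by (simp add: Cm_def comm_def mult.assoc)
  hence "s \<in> Cm A c" using C1 C2 by simp
  hence cs: "comm c s" by (simp add: Cm_def)
  have p': "1-p\<in>projs A" using S.proj_compl[OF p] .
  have q': "1-q\<in>projs A" using S.proj_compl[OF q] .
  have jc: "e*j = j*e" if "e\<in>projs A" "j\<in>projs A" "sa_le Ap e j" for e j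
    using S.le_imp[OF that] by simp
  have jc': "e*j = j*e" if "(1-e)*j = j*(1-e)" for e j :: 'r
  proof -
    have "j - e*j = j - j*e" using that by (simp add: algebra_simps)
    thus ?thesis by simp
  qed
  define J1 where "J1 = pjoin A Ap p q"
  define J2 where "J2 = pjoin A Ap p (1-q)"
  define J3 where "J3 = pjoin A Ap (1-p) q"
  define J4 where "J4 = pjoin A Ap (1-p) (1-q)"
  have J1: "J1\<in>projs A" "p*J1 = J1*p" "q*J1 = J1*q"
    using S.pjoin_props[OF p q] jc[OF p] jc[OF q] unfolding J1_def by blast+
  have J2: "J2\<in>projs A" "p*J2 = J2*p" "q*J2 = J2*q"
    using S.pjoin_props[OF p q'] jc[OF p] jc[OF q'] jc' unfolding J2_def by blast+
  have J3: "J3\<in>projs A" "p*J3 = J3*p" "q*J3 = J3*q"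
    using S.pjoin_props[OF p' q] jc[OF p'] jc[OF q] jc' unfolding J3_def by blast+
  have J4: "J4\<in>projs A" "p*J4 = J4*p" "q*J4 = J4*q"
    using S.pjoin_props[OF p' q'] jc[OF p'] jc[OF q'] jc' unfolding J4_def by blast+
  have meetc: "pmeet A Ap e f \<in> projs A \<and> p*pmeet A Ap e f = pmeet A Ap e f*p \<and> q*pmeet A Ap e f = pmeet A Ap e f*q"
    if "e\<in>projs A" "p*e=e*p" "q*e=e*q" "f\<in>projs A" "p*f=f*p" "q*f=f*q" for e f
  proof -
    have "\<forall>x\<in>A. e*x=x*e \<longrightarrow> f*x=x*f \<longrightarrow> pmeet A Ap e f*x=x*pmeet A Ap e f"
      and m: "pmeet A Ap e f \<in> projs A"
      using S.pmeet_props[OF that(1) that(4)] by blast+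
    hence "pmeet A Ap e f*p=p*pmeet A Ap e f" "pmeet A Ap e f*q=q*pmeet A Ap e f"
      using that pA qA by auto
    thus ?thesis using m by simp
  qed
  define M1 where "M1 = pmeet A Ap J1 J2"
  define M2 where "M2 = pmeet A Ap M1 J3"
  have M1: "M1\<in>projs A" "p*M1 = M1*p" "q*M1 = M1*q" using meetc[OF J1 J2] unfolding M1_def by blast+
  have M2: "M2\<in>projs A" "p*M2 = M2*p" "q*M2 = M2*q" using meetc[OF M1 J3] unfolding M2_def by blast+
  have rr: "r\<in>projs A" "p*r = r*p" "q*r = r*q" using meetc[OF M2 J4]
    unfolding r_def J1_def[symmetric] J2_def[symmetric] J3_def[symmetric] J4_def[symmetric]
      M1_def[symmetric] M2_def[symmetric] by blast+
  have rA: "r\<in>A" using S.proj rr(1) by blast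
  have cr: "comm c r \<and> comm s r" using pq_comm[OF rA rr(2) rr(3)] .
  have ix: "Cm A p \<inter> Cm A q \<subseteq> Cm A c"
    using pq_comm by (auto simp: Cm_def comm_def)
  show ?thesis
    using i1 i2 i3 i4 c(3) s(3) iii ab XY vi C1 C2 C3 cp cq sp sq' cs cr ix
    unfolding X_def[symmetric] Y_def[symmetric]
    by (simp add: comm_sym)
qed

end
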